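(* Let $M:\ u=z\bar z+\sum_{j,k\geq2}F_{j,k}z^j\bar z^k$ and $M':\ u'=z'\bar z'+\sum_{j,k\geq2}F'_{j,k}z'^j\bar z'^k$ be rigid real-analytic hypersurfaces in $\mathbb{C}^2$. If a local rigid biholomorphism $(z,w)\mapsto(f(z),\rho w+g(z))=:(z',w')$ with $\rho\in\mathbb{R}\setminus\{0\}$ and $f(0)=g(0)=0$ maps $M$ into $M'$, then there exist $\rho\in\mathbb{R}_{>0}$ and $\varphi\in\mathbb{R}$ such that $z'=\rho^{1/2}e^{i\varphi}z$ and $w'=\rho w$.
   Context: Coordinates on $\mathbb{C}^2$ are $(z,w)$, $w=u+iv$, and similarly primed; the graphing functions are real-valued ($\overline{F_{j,k}}=F_{k,j}$). *)

theory Defs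
  imports "HOL-Complex_Analysis.Complex_Analysis"
begin

definition idx2 :: "(nat \<times> nat) set" where
  "idx2 = {(j,k). 2 \<le> j \<and> 2 \<le> k}"

text \<open>Coefficients F_{j,k} of a real-valued convergent power series
  (conjugation symmetry + convergence on some polydisc).\<close>
definition rigid_coeffs :: "(nat \<Rightarrow> nat \<Rightarrow> complex) \<Rightarrow> bool" where
  "rigid_coeffs F \<longleftrightarrow> (\<forall>j k. F k j = cnj (F j k)) \<and>
     (\<exists>r>0. (\<lambda>(j,k). norm (F j k) * r ^ (j + k)) summable_on idx2)"

definition graph_fun :: "(nat \<Rightarrow> nat \<Rightarrow> complex) \<Rightarrow> complex \<Rightarrow> real" where
  "graph_fun F z = Re (z * cnj z + (\<Sum>\<^sub>\<infinity>(j,k)\<in>idx2. F j k * z ^ j * cnj z ^ k))"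

text \<open>The rigid hypersurface M: u = graph_fun F z, where w = u + i v.\<close>
definition rigid_hyp :: "(nat \<Rightarrow> nat \<Rightarrow> complex) \<Rightarrow> (complex \<times> complex) set" where
  "rigid_hyp F = {(z,w). Re w = graph_fun F z}"

end

theory Submission
  imports Defs
begin

definition SS :: "(nat \<Rightarrow> nat \<Rightarrow> complex) \<Rightarrow> complex \<Rightarrow> complex \<Rightarrow> complex" where
  "SS F a b = (\<Sum>\<^sub>\<infinity>p\<in>idx2. F (fst p) (snd p) * a ^ fst p * b ^ snd p)"

lemma graph_fun_SS: "graph_fun F z = Re (z * cnj z + SS F z (cnj z))"
  unfolding graph_fun_def SS_def by (simp add: case_prod_beta')

lemma term_bound:
  fixes a b :: complex
  assumes "norm a \<le> r" "norm b \<le> r" "p \<in> idx2" "r > 0"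
  shows "norm (F (fst p) (snd p) * a ^ fst p * b ^ snd p)
     \<le> norm (F (fst p) (snd p)) * r ^ (fst p + snd p) * ((norm b)^2 / r^2)"
proof -
  obtain j k where p: "p = (j,k)" and j: "2 \<le> j" and k: "2 \<le> k" using assms(3) unfolding idx2_def by auto
  have ha: "norm a ^ j \<le> r ^ j" by (rule power_mono) (use assms in auto)
  have hb: "norm b ^ (k-2) \<le> r ^ (k-2)" by (rule power_mono) (use assms in auto)
  have kk: "k = (k - 2) + 2" using k by simp
  have "norm b ^ k = norm b ^ (k-2) * norm b ^ 2" by (metis kk power_add)
  also have "\<dots> \<le> r ^ (k-2) * norm b ^ 2" by (rule mult_right_mono[OF hb]) auto
  finally have hb2: "norm b ^ k \<le> r ^ (k-2) * norm b ^ 2" .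
  have rr: "r ^ (j + k) * ((norm b)^2 / r^2) = r ^ j * (r ^ (k-2) * norm b ^ 2)"
    using assms(4) by (subst kk) (simp add: power_add field_simps power2_eq_square)
  have "norm (F j k * a ^ j * b ^ k) = norm (F j k) * (norm a ^ j * norm b ^ k)"
    by (simp add: norm_mult norm_power)
  also have "\<dots> \<le> norm (F j k) * (r ^ j * (r ^ (k-2) * norm b ^ 2))"
    by (intro mult_left_mono mult_mono ha hb2) (use assms in auto)
  also have "\<dots> = norm (F j k) * (r ^ (j + k) * ((norm b)^2 / r^2))" using rr by simp
  finally show ?thesis using p by (simp add: mult.assoc)
qed

lemma term_bound':
  fixes a b :: complex
  assumes "norm a \<le> r" "norm b \<le> r" "p \<in> idx2" "r > 0"
  shows "norm (F (fst p) (snd p) * a ^ fst p * b ^ snd p) \<le> norm (F (fst p) (snd p)) * r ^ (fst p + snd p)"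
proof -
  have "(norm b)^2 / r^2 \<le> 1" using assms by (simp add: power_mono divide_le_eq_1)
  hence "norm (F (fst p) (snd p)) * r ^ (fst p + snd p) * ((norm b)^2 / r^2) \<le> norm (F (fst p) (snd p)) * r ^ (fst p + snd p) * 1"
    using assms(4) by (intro mult_left_mono) auto
  with term_bound[OF assms, where F=F] show ?thesis by linarith
qed

lemma SS_abs_summable:
  fixes a b :: complex
  assumes sm: "(\<lambda>(j,k). norm (F j k) * r ^ (j + k)) summable_on idx2"
    and "norm a \<le> r" "norm b \<le> r" "r > 0" "B \<subseteq> idx2"
  shows "(\<lambda>p. norm (F (fst p) (snd p) * a ^ fst p * b ^ snd p)) summable_on B"
proof -
  have "(\<lambda>p. norm (F (fst p) (snd p)) * r ^ (fst p + snd p)) summable_on idx2"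
    using sm by (simp add: case_prod_beta')
  hence "(\<lambda>p. norm (F (fst p) (snd p)) * r ^ (fst p + snd p)) summable_on B"
    using assms(5) summable_on_subset by blast
  thus ?thesis
    by (rule Infinite_Sum.abs_summable_on_comparison_test') (use term_bound' assms in auto)
qed


lemma SS_bound:
  fixes a b :: complex
  assumes sm: "(\<lambda>(j,k). norm (F j k) * r ^ (j + k)) summable_on idx2"
    and "norm a \<le> r" "norm b \<le> r" "r > 0"
  shows "norm (SS F a b) \<le> (\<Sum>\<^sub>\<infinity>(j,k)\<in>idx2. norm (F j k) * r ^ (j + k)) * ((norm b)^2 / r^2)"
proof -
  have sm': "(\<lambda>p. norm (F (fst p) (snd p)) * r ^ (fst p + snd p)) summable_on idx2"
    using sm by (simp add: case_prod_beta')
  have ns: "(\<lambda>p. norm (F (fst p) (snd p) * a ^ fst p * b ^ snd p)) summable_on idx2"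
    using SS_abs_summable[OF sm assms(2-4)] by simp
  have "norm (SS F a b) \<le> (\<Sum>\<^sub>\<infinity>p\<in>idx2. norm (F (fst p) (snd p) * a ^ fst p * b ^ snd p))"
    unfolding SS_def by (rule norm_infsum_bound) (use ns in simp)
  also have "\<dots> \<le> (\<Sum>\<^sub>\<infinity>p\<in>idx2. norm (F (fst p) (snd p)) * r ^ (fst p + snd p) * ((norm b)^2 / r^2))"
    by (rule infsum_mono[OF ns summable_on_cmult_left[OF sm']]) (use term_bound assms in auto)
  also have "\<dots> = (\<Sum>\<^sub>\<infinity>p\<in>idx2. norm (F (fst p) (snd p)) * r ^ (fst p + snd p)) * ((norm b)^2 / r^2)"
    by (rule infsum_cmult_left) (use sm' in auto)
  finally show ?thesis by (simp add: case_prod_beta')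
qed

lemma SS_zero: "SS F a 0 = 0"
  unfolding SS_def by (rule infsum_0) (auto simp: idx2_def)

lemma SS_real:
  assumes "\<forall>j k. F k j = cnj (F j k)"
  shows "cnj (SS F a (cnj a)) = SS F a (cnj a)"
proof -
  let ?h = "\<lambda>p. F (fst p) (snd p) * a ^ fst p * cnj a ^ snd p"
  have "cnj (SS F a (cnj a)) = (\<Sum>\<^sub>\<infinity>p\<in>idx2. cnj (?h p))"
    unfolding SS_def by (rule infsum_cnj[symmetric])
  also have "\<dots> = (\<Sum>\<^sub>\<infinity>p\<in>idx2. (?h \<circ> prod.swap) p)"
  proof (rule infsum_cong)
    fix p :: "nat \<times> nat"
    have c: "cnj (F (fst p) (snd p)) = F (snd p) (fst p)" using assms by metis
    show "cnj (?h p) = (?h \<circ> prod.swap) p"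
      by (simp add: c)
  qed
  also have "\<dots> = infsum ?h (prod.swap ` idx2)"
    by (rule infsum_reindex[symmetric]) auto
  also have "prod.swap ` idx2 = idx2" unfolding idx2_def by force
  finally show ?thesis unfolding SS_def by simp
qed

lemma SS_holo:
  fixes a b :: "complex \<Rightarrow> complex"
  assumes sm: "(\<lambda>(j,k). norm (F j k) * r ^ (j + k)) summable_on idx2"
    and r: "r > 0"
    and ha: "a holomorphic_on T" and hb: "b holomorphic_on T" and sub: "cball c R \<subseteq> T"
    and bd: "\<And>s. s \<in> cball c R \<Longrightarrow> norm (a s) \<le> r \<and> norm (b s) \<le> r"
  shows "(\<lambda>s. SS F (a s) (b s)) holomorphic_on ball c R"
proof -
  let ?M = "\<lambda>p. norm (F (fst p) (snd p)) * r ^ (fst p + snd p)"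
  let ?h = "\<lambda>s p. F (fst p) (snd p) * a s ^ fst p * b s ^ snd p"
  have sm': "?M summable_on idx2"
    using sm by (simp add: case_prod_beta')
  have ca: "continuous_on (cball c R) a" and cb: "continuous_on (cball c R) b"
    using ha hb sub holomorphic_on_imp_continuous_on continuous_on_subset by blast+
  have ha': "a holomorphic_on ball c R" and hb': "b holomorphic_on ball c R"
    using ha hb sub ball_subset_cball holomorphic_on_subset by blast+
  have ul: "uniform_limit (cball c R) (\<lambda>X s. sum (?h s) X) (\<lambda>s. SS F (a s) (b s)) (finite_subsets_at_top idx2)"
    unfolding uniform_limit_iff
  proof (intro allI impI)
    fix e :: real assume e: "e > 0"
    have "(sum ?M \<longlongrightarrow> infsum ?M idx2) (finite_subsets_at_top idx2)"
      using sm' has_sum_def has_sum_infsum by blast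
    hence ev1: "\<forall>\<^sub>F X in finite_subsets_at_top idx2. dist (sum ?M X) (infsum ?M idx2) < e"
      using e tendstoD by blast
    have ev2: "\<forall>\<^sub>F X in finite_subsets_at_top idx2. finite X \<and> X \<subseteq> idx2" by auto
    show "\<forall>\<^sub>F X in finite_subsets_at_top idx2. \<forall>s\<in>cball c R. dist (sum (?h s) X) (SS F (a s) (b s)) < e"
      using ev1 ev2
    proof eventually_elim
      case (elim X)
      hence fX: "finite X" and XI: "X \<subseteq> idx2" and d: "dist (sum ?M X) (infsum ?M idx2) < e" by auto
      have smD: "?M summable_on (idx2 - X)" using sm' summable_on_subset by blast
      have eqM: "infsum ?M idx2 = sum ?M X + infsum ?M (idx2 - X)"
      proof -
        have "infsum ?M idx2 = infsum ?M (X \<union> (idx2 - X))" using XI by (simp add: Un_absorb1)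
        also have "\<dots> = infsum ?M X + infsum ?M (idx2 - X)"
          by (rule infsum_Un_disjoint) (use fX smD in auto)
        finally show ?thesis using fX by simp
      qed
      show ?case
      proof
        fix s assume s: "s \<in> cball c R"
        have bds: "norm (a s) \<le> r" "norm (b s) \<le> r" using bd[OF s] by auto
        have ns: "(\<lambda>p. norm (?h s p)) summable_on (idx2 - X)"
          using SS_abs_summable[OF sm bds r, of "idx2 - X"] by auto
        have hs: "?h s summable_on (idx2 - X)"
          by (rule Infinite_Sum.abs_summable_summable) (use ns in simp)
        have eqh: "SS F (a s) (b s) = sum (?h s) X + infsum (?h s) (idx2 - X)"
        proof -
          have "SS F (a s) (b s) = infsum (?h s) (X \<union> (idx2 - X))" using XI unfolding SS_def by (simp add: Un_absorb1)
          also have "\<dots> = infsum (?h s) X + infsum (?h s) (idx2 - X)"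
            by (rule infsum_Un_disjoint) (use fX hs in auto)
          finally show ?thesis using fX by simp
        qed
        have "dist (sum (?h s) X) (SS F (a s) (b s)) = norm (infsum (?h s) (idx2 - X))"
          using eqh by (simp add: dist_norm)
        also have "\<dots> \<le> infsum (\<lambda>p. norm (?h s p)) (idx2 - X)"
          by (rule norm_infsum_bound) (use ns in simp)
        also have "\<dots> \<le> infsum ?M (idx2 - X)"
          by (rule infsum_mono[OF ns smD]) (use term_bound' bds r in auto)
        also have "\<dots> < e" using eqM d by (simp add: dist_norm)
        finally show "dist (sum (?h s) X) (SS F (a s) (b s)) < e" .
      qed
    qed
  qed
  have cont: "\<forall>\<^sub>F X in finite_subsets_at_top idx2. continuous_on (cball c R) (\<lambda>s. sum (?h s) X) \<and> (\<lambda>s. sum (?h s) X) holomorphic_on ball c R"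
    using ca cb ha' hb' by (intro always_eventually allI conjI continuous_intros holomorphic_intros)
  show ?thesis
    by (rule holomorphic_uniform_limit[OF cont ul]) auto
qed

lemma cnj_deriv:
  assumes "(f has_field_derivative D) (at (cnj x))"
  shows "((\<lambda>z. cnj (f (cnj z))) has_field_derivative cnj D) (at x)"
proof -
  have L1: "((\<lambda>y. (f y - f (cnj x)) / (y - cnj x)) \<longlongrightarrow> D) (at (cnj x))"
    using assms has_field_derivative_iff by blast
  have L2: "filterlim cnj (at (cnj x)) (at x)"
  proof (rule filterlim_atI)
    show "(cnj \<longlongrightarrow> cnj x) (at x)"
      by (intro tendsto_intros)
    show "\<forall>\<^sub>F z in at x. cnj z \<noteq> cnj x"
      by (auto simp: eventually_at_filter)
  qed
  have "((\<lambda>z. (f (cnj z) - f (cnj x)) / (cnj z - cnj x)) \<longlongrightarrow> D) (at x)"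
    by (rule filterlim_compose[OF L1 L2])
  hence "((\<lambda>z. cnj ((f (cnj z) - f (cnj x)) / (cnj z - cnj x))) \<longlongrightarrow> cnj D) (at x)"
    by (rule tendsto_cnj)
  thus ?thesis unfolding has_field_derivative_iff by simp
qed

lemma cnj_holo:
  assumes "f holomorphic_on ball 0 e"
  shows "(\<lambda>z. cnj (f (cnj z))) holomorphic_on ball 0 e"
proof -
  have "\<exists>D. ((\<lambda>z. cnj (f (cnj z))) has_field_derivative D) (at x)" if "x \<in> ball 0 e" for x
  proof -
    have cx: "cnj x \<in> ball 0 e" using that by simp
    have "\<exists>D. (f has_field_derivative D) (at (cnj x))"
      using assms cx holomorphic_on_open[of "ball 0 e" f] by simp
    then obtain D where "(f has_field_derivative D) (at (cnj x))" by blast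
    thus ?thesis using cnj_deriv by blast
  qed
  thus ?thesis using holomorphic_on_open[of "ball 0 e"] open_ball by auto
qed


definition Phi :: "(nat \<Rightarrow> nat \<Rightarrow> complex) \<Rightarrow> (nat \<Rightarrow> nat \<Rightarrow> complex) \<Rightarrow> (complex \<Rightarrow> complex) \<Rightarrow> (complex \<Rightarrow> complex) \<Rightarrow> real \<Rightarrow> complex \<Rightarrow> complex \<Rightarrow> complex" where
  "Phi F F' f g \<rho> z \<zeta> = of_real \<rho> * (z * \<zeta> + SS F z \<zeta>) + (g z + cnj (g (cnj \<zeta>))) / 2
      - f z * cnj (f (cnj \<zeta>)) - SS F' (f z) (cnj (f (cnj \<zeta>)))"

lemma Phi_holo:
  fixes a b :: "complex \<Rightarrow> complex"
  assumes sm1: "(\<lambda>(j,k). norm (F j k) * r1 ^ (j + k)) summable_on idx2" and r1: "r1 > 0"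
    and sm2: "(\<lambda>(j,k). norm (F' j k) * r2 ^ (j + k)) summable_on idx2" and r2: "r2 > 0"
    and hf: "f holomorphic_on ball 0 \<epsilon>" and hg: "g holomorphic_on ball 0 \<epsilon>"
    and ha: "a holomorphic_on T" and hb: "b holomorphic_on T" and sub: "cball 0 R \<subseteq> T"
    and inT: "\<And>s. s \<in> T \<Longrightarrow> a s \<in> ball 0 \<epsilon> \<and> b s \<in> ball 0 \<epsilon>"
    and bd: "\<And>s. s \<in> cball 0 R \<Longrightarrow> norm (a s) \<le> r1 \<and> norm (b s) \<le> r1 \<and>
               norm (f (a s)) \<le> r2 \<and> norm (cnj (f (cnj (b s)))) \<le> r2"
  shows "(\<lambda>s. Phi F F' f g \<rho> (a s) (b s)) holomorphic_on ball 0 R"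
proof -
  have fs: "(\<lambda>z. cnj (f (cnj z))) holomorphic_on ball 0 \<epsilon>" using cnj_holo[OF hf] .
  have gs: "(\<lambda>z. cnj (g (cnj z))) holomorphic_on ball 0 \<epsilon>" using cnj_holo[OF hg] .
  have comp: "(\<lambda>s. h (c s)) holomorphic_on T"
    if "h holomorphic_on ball 0 \<epsilon>" "c holomorphic_on T" "\<And>s. s \<in> T \<Longrightarrow> c s \<in> ball 0 \<epsilon>" for h c
  proof -
    have "c ` T \<subseteq> ball 0 \<epsilon>" using that(3) by blast
    thus ?thesis using holomorphic_on_compose_gen[of c T h "ball 0 \<epsilon>"] that(1,2) by (simp add: o_def)
  qed
  have fa: "(\<lambda>s. f (a s)) holomorphic_on T" by (rule comp[OF hf ha]) (use inT in auto)
  have ga: "(\<lambda>s. g (a s)) holomorphic_on T" by (rule comp[OF hg ha]) (use inT in auto)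
  have fsb: "(\<lambda>s. cnj (f (cnj (b s)))) holomorphic_on T" by (rule comp[OF fs hb]) (use inT in auto)
  have gsb: "(\<lambda>s. cnj (g (cnj (b s)))) holomorphic_on T" by (rule comp[OF gs hb]) (use inT in auto)
  have BT: "ball 0 R \<subseteq> T" using sub by auto
  have S1: "(\<lambda>s. SS F (a s) (b s)) holomorphic_on ball 0 R"
    by (rule SS_holo[OF sm1 r1 ha hb sub]) (use bd in auto)
  have S2: "(\<lambda>s. SS F' (f (a s)) (cnj (f (cnj (b s))))) holomorphic_on ball 0 R"
    by (rule SS_holo[OF sm2 r2 fa fsb sub]) (use bd in auto)
  have h1: "a holomorphic_on ball 0 R" "b holomorphic_on ball 0 R" "(\<lambda>s. f (a s)) holomorphic_on ball 0 R"
     "(\<lambda>s. g (a s)) holomorphic_on ball 0 R" "(\<lambda>s. cnj (f (cnj (b s)))) holomorphic_on ball 0 R"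
     "(\<lambda>s. cnj (g (cnj (b s)))) holomorphic_on ball 0 R"
    using ha hb fa ga fsb gsb BT holomorphic_on_subset by blast+
  show ?thesis unfolding Phi_def
    using S1 S2 h1 by (intro holomorphic_intros) auto
qed


theorem lemma2p12:
  fixes F F' :: "nat \<Rightarrow> nat \<Rightarrow> complex"
    and f g :: "complex \<Rightarrow> complex"
    and \<rho> :: real and \<epsilon> :: real
  assumes "rigid_coeffs F" and "rigid_coeffs F'"
    and "\<rho> \<noteq> 0"
    and "\<epsilon> > 0"
    and "f holomorphic_on ball 0 \<epsilon>" and "g holomorphic_on ball 0 \<epsilon>"
    and "f 0 = 0" and "g 0 = 0"
    and "deriv f 0 \<noteq> 0"
    and "\<forall>z w. (z, w) \<in> rigid_hyp F \<and> norm z < \<epsilon> \<and> norm w < \<epsilon> \<longrightarrow>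
           (f z, of_real \<rho> * w + g z) \<in> rigid_hyp F'"
  shows "\<rho> > 0 \<and> (\<exists>\<phi>::real. \<exists>\<delta>>0. \<forall>z\<in>ball 0 \<delta>.
           f z = of_real (sqrt \<rho>) * exp (\<i> * of_real \<phi>) * z \<and> g z = 0)"
proof -
  note eps = assms(4) and hf = assms(5) and hg = assms(6) and f0 = assms(7) and g0 = assms(8)
    and a1nz = assms(9) and hyp = assms(10)
  have hF: "\<forall>j k. F k j = cnj (F j k)" using assms(1) unfolding rigid_coeffs_def by blast
  have hF': "\<forall>j k. F' k j = cnj (F' j k)" using assms(2) unfolding rigid_coeffs_def by blast
  obtain r1 where r1: "r1 > 0" and sm1: "(\<lambda>(j,k). norm (F j k) * r1 ^ (j + k)) summable_on idx2"
    using assms(1) unfolding rigid_coeffs_def by blast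
  obtain r2 where r2: "r2 > 0" and sm2: "(\<lambda>(j,k). norm (F' j k) * r2 ^ (j + k)) summable_on idx2"
    using assms(2) unfolding rigid_coeffs_def by blast
  define M1 where "M1 = (\<Sum>\<^sub>\<infinity>(j,k)\<in>idx2. norm (F j k) * r1 ^ (j + k))"
  define M2 where "M2 = (\<Sum>\<^sub>\<infinity>(j,k)\<in>idx2. norm (F' j k) * r2 ^ (j + k))"
  have M1nn: "M1 \<ge> 0" unfolding M1_def by (rule infsum_nonneg) (use r1 in auto)
  define K where "K = 1 + M1 / r1^2"
  have K1: "K \<ge> 1" unfolding K_def using M1nn r1 by simp
  have "continuous (at 0) f"
    using hf eps holomorphic_on_imp_continuous_on continuous_on_interior by (metis centre_in_ball interior_ball)
  then obtain d1 where d1: "d1 > 0" and fd1: "\<And>z. norm z < d1 \<Longrightarrow> norm (f z) < r2"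
  proof -
    from \<open>continuous (at 0) f\<close> r2 obtain d where "d > 0" "\<forall>x'. dist x' 0 < d \<longrightarrow> dist (f x') (f 0) < r2"
      unfolding continuous_at_eps_delta by blast
    thus ?thesis using that f0 by (auto simp: dist_norm)
  qed
  define R where "R = min 1 (min (\<epsilon> / (2*K)) (min r1 (d1/2)))"
  have R0: "R > 0" unfolding R_def using eps K1 r1 d1 by auto
  have R1: "R \<le> 1" "R \<le> \<epsilon> / (2*K)" "R \<le> r1" "R \<le> d1/2" unfolding R_def by auto
  have Reps: "R < \<epsilon>"
  proof -
    have "\<epsilon> / (2*K) \<le> \<epsilon> / 2" using K1 eps by (intro divide_left_mono) auto
    thus ?thesis using R1 eps by linarith
  qed
  have fbd: "norm (f z) \<le> r2" if "norm z \<le> R" for z using fd1[of z] that R1 d1 by force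
  define \<Phi> where "\<Phi> = Phi F F' f g \<rho>"

  have diag: "\<Phi> z (cnj z) = 0" if z: "z \<in> ball 0 R" for z
  proof -
    have zn: "norm z < R" using z by simp
    define A where "A = SS F z (cnj z)"
    define B where "B = SS F' (f z) (cnj (f z))"
    have ImA: "Im A = 0" using SS_real[OF hF, of z] unfolding A_def by (simp add: complex_eq_iff)
    have ImB: "Im B = 0" using SS_real[OF hF', of "f z"] unfolding B_def by (simp add: complex_eq_iff)
    have Abd: "norm A \<le> M1 * ((norm z)^2 / r1^2)"
      unfolding A_def M1_def using SS_bound[OF sm1, of z "cnj z"] zn R1 r1 by simp
    have gF: "graph_fun F z = (norm z)^2 + Re A"
      unfolding graph_fun_SS A_def by (simp add: complex_norm_square[symmetric] del: of_real_power)
    have "\<bar>graph_fun F z\<bar> \<le> (norm z)^2 + norm A"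
      using gF abs_Re_le_cmod[of A] zero_le_power2[of "cmod z"] by arith
    also have "\<dots> \<le> (norm z)^2 * K" using Abd unfolding K_def by (simp add: algebra_simps)
    also have "\<dots> \<le> R^2 * K" using zn K1 by (intro mult_right_mono power_mono) auto
    also have "\<dots> \<le> R * K" using R0 R1 K1 by (intro mult_right_mono) (auto simp: power2_eq_square)
    also have "\<dots> \<le> \<epsilon> / 2" using R1(2) K1 by (simp add: field_simps)
    also have "\<dots> < \<epsilon>" using eps by simp
    finally have gsmall: "norm (complex_of_real (graph_fun F z)) < \<epsilon>" by simp
    have "(z, complex_of_real (graph_fun F z)) \<in> rigid_hyp F" unfolding rigid_hyp_def by simp
    hence "(f z, of_real \<rho> * complex_of_real (graph_fun F z) + g z) \<in> rigid_hyp F'"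
      using hyp gsmall zn Reps by auto
    hence key: "\<rho> * graph_fun F z + Re (g z) = Re (f z * cnj (f z) + B)"
      unfolding rigid_hyp_def graph_fun_SS B_def by simp
    have "\<Phi> z (cnj z) = of_real \<rho> * (z * cnj z + A) + (g z + cnj (g z)) / 2 - f z * cnj (f z) - B"
      unfolding \<Phi>_def Phi_def A_def B_def by simp
    also have "\<dots> = 0"
    proof (rule complex_eqI)
      show "Im (of_real \<rho> * (z * cnj z + A) + (g z + cnj (g z)) / 2 - f z * cnj (f z) - B) = Im 0"
        using ImA ImB by simp
      show "Re (of_real \<rho> * (z * cnj z + A) + (g z + cnj (g z)) / 2 - f z * cnj (f z) - B) = Re 0"
        using key gF by (simp add: complex_norm_square[symmetric] del: of_real_power)
    qed
    finally show ?thesis .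
  qed

  have line: "\<Phi> (t * u) (t * cnj u) = 0" if u: "norm u = 1" and t: "t \<in> ball 0 R" for u t
  proof -
    have hol: "(\<lambda>t. \<Phi> (t * u) (t * cnj u)) holomorphic_on ball 0 R"
      unfolding \<Phi>_def
    proof (rule Phi_holo[OF sm1 r1 sm2 r2 hf hg, of "\<lambda>t. t*u" "ball 0 \<epsilon>" "\<lambda>t. t * cnj u" R \<rho>])
      show "(\<lambda>t. t * u) holomorphic_on ball 0 \<epsilon>" by (intro holomorphic_intros)
      show "(\<lambda>t. t * cnj u) holomorphic_on ball 0 \<epsilon>" by (intro holomorphic_intros)
      show "cball 0 R \<subseteq> ball 0 \<epsilon>" using Reps by auto
      fix s
      show "s \<in> ball 0 \<epsilon> \<Longrightarrow> s * u \<in> ball 0 \<epsilon> \<and> s * cnj u \<in> ball 0 \<epsilon>"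
        using u by (simp add: norm_mult)
      assume s: "s \<in> cball 0 R"
      have "cnj (s * cnj u) = cnj s * u" by simp
      thus "norm (s * u) \<le> r1 \<and> norm (s * cnj u) \<le> r1 \<and> norm (f (s * u)) \<le> r2 \<and> norm (cnj (f (cnj (s * cnj u)))) \<le> r2"
        using s u R1 fbd[of "s*u"] fbd[of "cnj s * u"] by (simp add: norm_mult)
    qed
    define U where "U = {complex_of_real x | x. 0 < x \<and> x < R}"
    have U: "U \<subseteq> ball 0 R" unfolding U_def by auto
    have lim: "0 islimpt U"
      unfolding islimpt_approachable
    proof (intro allI impI)
      fix e :: real assume e: "e > 0"
      let ?x = "complex_of_real (min e R / 2)"
      have "?x \<in> U" unfolding U_def
        by (rule CollectI, rule exI[of _ "min e R / 2"]) (use e R0 in auto)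
      moreover have "?x \<noteq> 0" "dist ?x 0 < e" using e R0 by auto
      ultimately show "\<exists>x'\<in>U. x' \<noteq> 0 \<and> dist x' 0 < e" by blast
    qed
    have z0: "\<Phi> (x * u) (x * cnj u) = 0" if "x \<in> U" for x
    proof -
      obtain y where y: "x = complex_of_real y" "0 < y" "y < R" using \<open>x \<in> U\<close> unfolding U_def by auto
      have e1: "x * cnj u = cnj (x * u)" using y by simp
      have "x * u \<in> ball 0 R" using y u by (simp add: norm_mult)
      hence "\<Phi> (x * u) (cnj (x * u)) = 0" by (rule diag)
      thus ?thesis by (metis e1)
    qed
    show ?thesis
      by (rule analytic_continuation[OF hol open_ball connected_ball U _ lim z0 t]) (use R0 in auto)
  qed
  have eqnorm: "\<Phi> z \<zeta> = 0" if nz: "norm z = norm \<zeta>" and zR: "norm z < R" for z \<zeta>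
  proof (cases "z = 0")
    case True
    hence "\<zeta> = 0" using nz by simp
    thus ?thesis using diag[of 0] True R0 by simp
  next
    case False
    hence \<zeta>0: "\<zeta> \<noteq> 0" using nz by auto
    define t where "t = csqrt (z * \<zeta>)"
    have t2: "t^2 = z * \<zeta>" unfolding t_def by simp
    have t0: "t \<noteq> 0" using t2 False \<zeta>0 by auto
    have "(norm t)^2 = (norm z)^2" using t2 nz by (metis norm_mult norm_power power2_eq_square)
    hence nt: "norm t = norm z" by (simp add: power2_eq_iff_nonneg)
    have tc: "t * cnj t = z * cnj z"
      using nt by (metis complex_norm_square)
    define u where "u = z / t"
    have u1: "norm u = 1" unfolding u_def using nt t0 False by (simp add: norm_divide)
    have tu: "t * u = z" unfolding u_def using t0 by simp
    have ct0: "cnj t \<noteq> 0" using t0 by simp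
    have "t * (t * cnj z) = t * (\<zeta> * cnj t)"
    proof -
      have "t * (t * cnj z) = t^2 * cnj z" by (simp add: power2_eq_square)
      also have "\<dots> = \<zeta> * (z * cnj z)" using t2 by simp
      also have "\<dots> = \<zeta> * (t * cnj t)" using tc by simp
      finally show ?thesis by simp
    qed
    hence "t * cnj z = \<zeta> * cnj t" using t0 by simp
    hence tcu: "t * cnj u = \<zeta>" unfolding u_def using ct0 by (simp add: field_simps)
    have "t \<in> ball 0 R" using nt zR by simp
    from line[OF u1 this] show ?thesis using tu tcu by simp
  qed
  have full: "\<Phi> z \<zeta> = 0" if z0: "0 < norm z" and zR: "norm z < R" and \<zeta>R: "norm \<zeta> < R" for z \<zeta>
  proof -
    have hol: "(\<lambda>\<zeta>. \<Phi> ((\<lambda>_. z) \<zeta>) ((\<lambda>x. x) \<zeta>)) holomorphic_on ball 0 R"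
      unfolding \<Phi>_def
    proof (rule Phi_holo[OF sm1 r1 sm2 r2 hf hg, of "\<lambda>_. z" "ball 0 \<epsilon>" "\<lambda>x. x" R \<rho>])
      show "(\<lambda>_. z) holomorphic_on ball 0 \<epsilon>" by (intro holomorphic_intros)
      show "(\<lambda>x. x) holomorphic_on ball 0 \<epsilon>" by (intro holomorphic_intros)
      show "cball 0 R \<subseteq> ball 0 \<epsilon>" using Reps by auto
      fix s :: complex
      show "s \<in> ball 0 \<epsilon> \<Longrightarrow> z \<in> ball 0 \<epsilon> \<and> s \<in> ball 0 \<epsilon>"
        using zR Reps by simp
      assume s: "s \<in> cball 0 R"
      thus "norm z \<le> r1 \<and> norm s \<le> r1 \<and> norm (f z) \<le> r2 \<and> norm (cnj (f (cnj s))) \<le> r2"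
        using zR R1 fbd[of z] fbd[of "cnj s"] by simp
    qed
    hence hol': "(\<lambda>\<zeta>. \<Phi> z \<zeta>) holomorphic_on ball 0 R" by simp
    let ?S = "sphere (0::complex) (norm z)"
    have Ssub: "?S \<subseteq> ball 0 R" using zR by auto
    have xi: "complex_of_real (norm z) \<in> ?S" by simp
    have notsing: "?S \<noteq> {x}" for x
    proof
      assume "?S = {x}"
      moreover have "- complex_of_real (norm z) \<in> ?S" by simp
      ultimately have "complex_of_real (norm z) = - complex_of_real (norm z)" using xi by (metis singletonD)
      thus False using z0 by (simp add: complex_eq_iff)
    qed
    have conn: "connected ?S"
      using path_connected_sphere[of "0::complex" "norm z"] path_connected_imp_connected by simp
    have lim: "complex_of_real (norm z) islimpt ?S"
      by (rule connected_imp_perfect[OF conn xi notsing])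
    have zero: "\<Phi> z x = 0" if "x \<in> ?S" for x
      using eqnorm[of z x] that zR by simp
    show ?thesis
      by (rule analytic_continuation[OF hol' open_ball connected_ball Ssub _ lim zero]) (use xi Ssub \<zeta>R in auto)
  qed
  have gz: "g z = 0" if z: "z \<in> ball 0 R" for z
  proof (cases "z = 0")
    case True thus ?thesis using g0 by simp
  next
    case False
    have "\<Phi> z 0 = 0" by (rule full) (use False z R0 in auto)
    thus ?thesis unfolding \<Phi>_def Phi_def using f0 g0 by (simp add: SS_zero)
  qed
  define fs where "fs = (\<lambda>\<zeta>. cnj (f (cnj \<zeta>)))"
  have evR: "\<forall>\<^sub>F \<zeta> in at (0::complex). \<zeta> \<noteq> 0 \<and> norm \<zeta> < R"
    unfolding eventually_at by (rule exI[of _ R]) (use R0 in auto)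
  define a1 where "a1 = deriv f 0"
  have fder: "(f has_field_derivative a1) (at 0)"
    unfolding a1_def by (rule holomorphic_derivI[OF hf open_ball]) (use eps in simp)
  have fsder: "(fs has_field_derivative cnj a1) (at 0)"
    unfolding fs_def using cnj_deriv[of f a1 0] fder by simp
  have Q1: "((\<lambda>\<zeta>. fs \<zeta> / \<zeta>) \<longlongrightarrow> cnj a1) (at 0)"
    using fsder unfolding has_field_derivative_iff fs_def using f0 by simp
  have Q0: "(fs \<longlongrightarrow> 0) (at 0)"
    using DERIV_isCont[OF fsder] unfolding isCont_def fs_def using f0 by simp
  have lin: "f z * cnj a1 = of_real \<rho> * z" if z: "z \<in> ball 0 R" for z
  proof (cases "z = 0")
    case True thus ?thesis using f0 by simp
  next
    case False
    have E1: "((\<lambda>\<zeta>. SS F z \<zeta> / \<zeta>) \<longlongrightarrow> 0) (at 0)"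
    proof (rule Lim_null_comparison)
      show "\<forall>\<^sub>F \<zeta> in at 0. norm (SS F z \<zeta> / \<zeta>) \<le> M1 / r1^2 * norm \<zeta>"
        using evR
      proof eventually_elim
        case (elim \<zeta>)
        have "norm (SS F z \<zeta>) \<le> M1 * ((norm \<zeta>)^2 / r1^2)"
          unfolding M1_def by (rule SS_bound[OF sm1]) (use elim z R1 r1 in auto)
        thus ?case using elim by (simp add: norm_divide field_simps power2_eq_square)
      qed
      show "((\<lambda>\<zeta>. M1 / r1^2 * norm \<zeta>) \<longlongrightarrow> 0) (at 0)"
        by (rule tendsto_mult_right_zero) (rule tendsto_norm_zero, rule tendsto_ident_at)
    qed
    have E2: "((\<lambda>\<zeta>. SS F' (f z) (fs \<zeta>) / \<zeta>) \<longlongrightarrow> 0) (at 0)"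
    proof (rule Lim_null_comparison)
      show "\<forall>\<^sub>F \<zeta> in at 0. norm (SS F' (f z) (fs \<zeta>) / \<zeta>) \<le> M2 / r2^2 * (norm (fs \<zeta> / \<zeta>) * norm (fs \<zeta>))"
        using evR
      proof eventually_elim
        case (elim \<zeta>)
        have "norm (fs \<zeta>) \<le> r2" unfolding fs_def using fbd[of "cnj \<zeta>"] elim by simp
        moreover have "norm (f z) \<le> r2" using fbd[of z] z by simp
        ultimately have "norm (SS F' (f z) (fs \<zeta>)) \<le> M2 * ((norm (fs \<zeta>))^2 / r2^2)"
          unfolding M2_def by (intro SS_bound[OF sm2]) (use r2 in auto)
        thus ?case using elim by (simp add: norm_divide field_simps power2_eq_square)
      qed
      have "((\<lambda>\<zeta>. M2 / r2^2 * (norm (fs \<zeta> / \<zeta>) * norm (fs \<zeta>))) \<longlongrightarrow> M2 / r2^2 * (norm (cnj a1) * norm (0::complex))) (at 0)"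
        by (intro tendsto_intros Q1 Q0)
      thus "((\<lambda>\<zeta>. M2 / r2^2 * (norm (fs \<zeta> / \<zeta>) * norm (fs \<zeta>))) \<longlongrightarrow> 0) (at 0)" by simp
    qed
    have EQ: "\<forall>\<^sub>F \<zeta> in at 0. f z * (fs \<zeta> / \<zeta>) = of_real \<rho> * z + of_real \<rho> * (SS F z \<zeta> / \<zeta>) - SS F' (f z) (fs \<zeta>) / \<zeta>"
      using evR
    proof eventually_elim
      case (elim \<zeta>)
      have "\<Phi> z \<zeta> = 0" by (rule full) (use False z elim in auto)
      moreover have "g z = 0" using gz z by simp
      moreover have "g (cnj \<zeta>) = 0" using gz elim by simp
      ultimately have "of_real \<rho> * (z * \<zeta> + SS F z \<zeta>) - f z * fs \<zeta> - SS F' (f z) (fs \<zeta>) = 0"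
        unfolding \<Phi>_def Phi_def fs_def by simp
      thus ?case using elim by (simp add: field_simps)
    qed
    have L1: "((\<lambda>\<zeta>. f z * (fs \<zeta> / \<zeta>)) \<longlongrightarrow> f z * cnj a1) (at 0)"
      by (intro tendsto_intros Q1)
    have L2: "((\<lambda>\<zeta>. of_real \<rho> * z + of_real \<rho> * (SS F z \<zeta> / \<zeta>) - SS F' (f z) (fs \<zeta>) / \<zeta>) \<longlongrightarrow> of_real \<rho> * z + of_real \<rho> * 0 - 0) (at 0)"
      by (intro tendsto_intros E1 E2)
    have L2': "((\<lambda>\<zeta>. f z * (fs \<zeta> / \<zeta>)) \<longlongrightarrow> of_real \<rho> * z + of_real \<rho> * 0 - 0) (at 0)"
      by (subst tendsto_cong[OF EQ]) (rule L2)
    show ?thesis using tendsto_unique[OF _ L1 L2'] by simp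
  qed
  have a0: "a1 \<noteq> 0" using a1nz unfolding a1_def .
  hence ca0: "cnj a1 \<noteq> 0" by simp
  have aa: "a1 * cnj a1 = of_real \<rho>"
  proof -
    have T1: "((\<lambda>y. f y / y) \<longlongrightarrow> a1) (at 0)"
      using fder unfolding has_field_derivative_iff using f0 by simp
    have EV: "\<forall>\<^sub>F y in at 0. of_real \<rho> / cnj a1 = f y / y"
      using evR
    proof eventually_elim
      case (elim y)
      have "f y * cnj a1 = of_real \<rho> * y" using lin[of y] elim by simp
      thus ?case using elim ca0 by (simp add: field_simps)
    qed
    have T2: "((\<lambda>y. f y / y) \<longlongrightarrow> of_real \<rho> / cnj a1) (at 0)"
      by (subst tendsto_cong[OF EV, symmetric]) simp
    have "a1 = of_real \<rho> / cnj a1" using tendsto_unique[OF _ T1 T2] by simp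
    thus ?thesis using ca0 by (simp add: field_simps)
  qed
  have rho_eq: "\<rho> = (norm a1)^2"
  proof -
    have "complex_of_real ((norm a1)^2) = complex_of_real \<rho>" using aa complex_norm_square[of a1] by simp
    thus ?thesis by (simp only: of_real_eq_iff)
  qed
  have rpos: "\<rho> > 0" using rho_eq a0 by simp
  have fz: "f z = a1 * z" if "z \<in> ball 0 R" for z
  proof -
    have "f z * cnj a1 = a1 * z * cnj a1" using lin[OF that] aa by (simp add: algebra_simps)
    thus ?thesis using ca0 by simp
  qed
  have a1form: "a1 = of_real (sqrt \<rho>) * exp (\<i> * of_real (Arg a1))"
  proof -
    have "sqrt \<rho> = norm a1" using rho_eq by simp
    moreover have "a1 = of_real (norm a1) * exp (\<i> * of_real (Arg a1))"
      using rcis_cmod_Arg[of a1] unfolding rcis_def cis_conv_exp by simp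
    ultimately show ?thesis by simp
  qed
  have "\<forall>z\<in>ball 0 R. f z = of_real (sqrt \<rho>) * exp (\<i> * of_real (Arg a1)) * z \<and> g z = 0"
  proof
    fix z :: complex assume z: "z \<in> ball 0 R"
    show "f z = of_real (sqrt \<rho>) * exp (\<i> * of_real (Arg a1)) * z \<and> g z = 0"
      using fz[OF z] gz[OF z] a1form by metis
  qed
  thus ?thesis using rpos R0 by blast
qed

end
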